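(* Let $\mathcal{G}=(V,L)$ be a finite connected undirected graph with monitor set $M$ and non-monitor set $N=V\setminus M$, $\sigma=|N|$, let $S\subseteq N$ be nonempty and let $q$ be an integer with $0\le q\le\sigma-1$. Then the following are equivalent: (1) for every set $V'\subseteq N$ with $|V'|\le q$, each connected component of $\mathcal{G}-V'$ that contains a node of $S$ contains a monitor; (2) $\Gamma_{\mathcal{G}^*}(S,m')\ge q+1$.
   Context: $\mathcal{G}-V'$ denotes deletion of the nodes of $V'$ and incident links. $\mathcal{N}(M)$ is the set of non-monitors adjacent to at least one monitor. $\mathcal{G}^*$ is obtained from $\mathcal{G}$ by deleting all monitors, adding a virtual node $m'$, and linking $m'$ to every node of $\mathcal{N}(M)$. For nodes $s,t$ of a graph $\mathcal{H}$, $C_{\mathcal{H}}(s,t)$ is a minimum-cardinality set of nodes (other than $s,t$) whose deletion destroys all $s$–$t$ paths; if $s,t$ are adjacent, $C_{\mathcal{H}}(s,t):=V(\mathcal{H})\setminus\{t\}$. $\Gamma_{\mathcal{H}}(S,m):=\min_{w\in S}|C_{\mathcal{H}}(w,m)|$. *)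

theory Defs
  imports Main
begin

definition ugraph :: "'a set \<Rightarrow> ('a \<Rightarrow> 'a \<Rightarrow> bool) \<Rightarrow> bool" where
  "ugraph W E \<longleftrightarrow> finite W \<and> (\<forall>u v. E u v \<longrightarrow> E v u) \<and> (\<forall>u. \<not> E u u)
     \<and> (\<forall>u v. E u v \<longrightarrow> u \<in> W \<and> v \<in> W)"

definition reach :: "'a set \<Rightarrow> ('a \<Rightarrow> 'a \<Rightarrow> bool) \<Rightarrow> 'a \<Rightarrow> 'a \<Rightarrow> bool" where
  "reach W E u v \<longleftrightarrow> u \<in> W \<and> (u, v) \<in> {(x, y). x \<in> W \<and> y \<in> W \<and> E x y}\<^sup>*"

definition connected_graph :: "'a set \<Rightarrow> ('a \<Rightarrow> 'a \<Rightarrow> bool) \<Rightarrow> bool" where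
  "connected_graph W E \<longleftrightarrow> (\<forall>u\<in>W. \<forall>v\<in>W. reach W E u v)"

definition min_cut :: "'a set \<Rightarrow> ('a \<Rightarrow> 'a \<Rightarrow> bool) \<Rightarrow> 'a \<Rightarrow> 'a \<Rightarrow> nat" where
  "min_cut W E s t =
     (if E s t then card (W - {t})
      else (LEAST k. \<exists>C. C \<subseteq> W - {s, t} \<and> card C = k \<and> \<not> reach (W - C) E s t))"

definition Gamma :: "'a set \<Rightarrow> ('a \<Rightarrow> 'a \<Rightarrow> bool) \<Rightarrow> 'a set \<Rightarrow> 'a \<Rightarrow> nat" where
  "Gamma W E S m = Min ((\<lambda>w. min_cut W E w m) ` S)"

definition mon_nbrs :: "'a set \<Rightarrow> ('a \<Rightarrow> 'a \<Rightarrow> bool) \<Rightarrow> 'a set \<Rightarrow> 'a set" where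
  "mon_nbrs V E M = {v \<in> V - M. \<exists>m\<in>M. E v m}"

text \<open>G*: monitors deleted, virtual node m' = None linked to every node of N(M);
  the original non-monitors v are represented as Some v.\<close>
definition star_V :: "'a set \<Rightarrow> 'a set \<Rightarrow> 'a option set" where
  "star_V V M = insert None (Some ` (V - M))"

definition star_E :: "'a set \<Rightarrow> ('a \<Rightarrow> 'a \<Rightarrow> bool) \<Rightarrow> 'a set \<Rightarrow> 'a option \<Rightarrow> 'a option \<Rightarrow> bool" where
  "star_E V E M x y = (case (x, y) of
       (Some u, Some v) \<Rightarrow> u \<in> V - M \<and> v \<in> V - M \<and> E u v
     | (None, Some v) \<Rightarrow> v \<in> mon_nbrs V E M
     | (Some u, None) \<Rightarrow> u \<in> mon_nbrs V E M
     | (None, None) \<Rightarrow> False)"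

end

theory Submission
  imports Defs
begin

lemma path_fwd:
  assumes M: "M \<subseteq> V" and C: "C \<subseteq> V - M" and s: "s \<in> V - M - C" and m: "m \<in> M"
    and r: "reach (V - C) E s m"
  shows "reach (star_V V M - Some ` C) (star_E V E M) (Some s) None"
proof -
  let ?R = "{(x, y). x \<in> V - C \<and> y \<in> V - C \<and> E x y}"
  let ?W = "star_V V M - Some ` C"
  let ?Q = "{(x, y). x \<in> ?W \<and> y \<in> ?W \<and> star_E V E M x y}"
  have p: "(s, m) \<in> ?R\<^sup>*" using r unfolding reach_def by simp
  have "(Some s, None) \<in> ?Q\<^sup>* \<or> (x \<notin> M \<and> x \<in> V - C \<and> (Some s, Some x) \<in> ?Q\<^sup>*)"
    if "(s, x) \<in> ?R\<^sup>*" for x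
    using that
  proof (induction rule: rtrancl_induct)
    case base then show ?case using s by auto
  next
    case (step y z)
    show ?case
    proof (cases "(Some s, None) \<in> ?Q\<^sup>*")
      case True then show ?thesis by simp
    next
      case False
      with step.IH have y: "y \<notin> M" "y \<in> V - C" "(Some s, Some y) \<in> ?Q\<^sup>*" by auto
      have yz: "z \<in> V - C" "E y z" using step.hyps(2) by auto
      show ?thesis
      proof (cases "z \<in> M")
        case True
        have "y \<in> mon_nbrs V E M" using y yz True unfolding mon_nbrs_def by auto
        hence "(Some y, None) \<in> ?Q" using y unfolding star_E_def star_V_def by auto
        with y(3) show ?thesis by (meson rtrancl.rtrancl_into_rtrancl)
      next
        case False
        hence "(Some y, Some z) \<in> ?Q" using y yz unfolding star_E_def star_V_def by auto
        with y(3) False yz show ?thesis by (meson rtrancl.rtrancl_into_rtrancl)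
      qed
    qed
  qed
  from this[OF p] m have "(Some s, None) \<in> ?Q\<^sup>*" by auto
  moreover have "Some s \<in> ?W" using s unfolding star_V_def by auto
  ultimately show ?thesis unfolding reach_def by simp
qed

lemma path_bwd:
  assumes M: "M \<subseteq> V" and C: "C \<subseteq> V - M" and s: "s \<in> V - M - C"
    and r: "reach (star_V V M - Some ` C) (star_E V E M) (Some s) None"
  shows "\<exists>m\<in>M. reach (V - C) E s m"
proof -
  let ?R = "{(x, y). x \<in> V - C \<and> y \<in> V - C \<and> E x y}"
  let ?W = "star_V V M - Some ` C"
  let ?Q = "{(x, y). x \<in> ?W \<and> y \<in> ?W \<and> star_E V E M x y}"
  have p: "(Some s, None) \<in> ?Q\<^sup>*" using r unfolding reach_def by simp
  have "(\<exists>m\<in>M. (s, m) \<in> ?R\<^sup>*) \<or> (\<exists>x. z = Some x \<and> x \<in> V - M - C \<and> (s, x) \<in> ?R\<^sup>*)"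
    if "(Some s, z) \<in> ?Q\<^sup>*" for z
    using that
  proof (induction rule: rtrancl_induct)
    case base then show ?case using s by auto
  next
    case (step y z)
    show ?case
    proof (cases "\<exists>m\<in>M. (s, m) \<in> ?R\<^sup>*")
      case True then show ?thesis by simp
    next
      case False
      with step.IH obtain x where x: "y = Some x" "x \<in> V - M - C" "(s, x) \<in> ?R\<^sup>*" by auto
      have yz: "z \<in> ?W" "star_E V E M y z" using step.hyps(2) by auto
      show ?thesis
      proof (cases z)
        case None
        with yz x obtain m where "m \<in> M" "E x m"
          unfolding star_E_def mon_nbrs_def by auto
        moreover have "m \<in> V - C" using `m \<in> M` M C by auto
        ultimately have "(x, m) \<in> ?R" using x by auto
        hence "(s, m) \<in> ?R\<^sup>*" by (rule rtrancl_into_rtrancl[OF x(3)])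
        with `m \<in> M` show ?thesis by auto
      next
        case (Some w)
        with yz x have w: "w \<in> V - M" "E x w" "w \<notin> C" unfolding star_E_def star_V_def by auto
        hence "(x, w) \<in> ?R" using x by auto
        hence "(s, w) \<in> ?R\<^sup>*" by (rule rtrancl_into_rtrancl[OF x(3)])
        with w Some show ?thesis by auto
      qed
    qed
  qed
  from this[OF p] obtain m where "m \<in> M" "(s, m) \<in> ?R\<^sup>*" by auto
  moreover have "s \<in> V - C" using s by auto
  ultimately show ?thesis unfolding reach_def by blast
qed


lemma per_s:
  assumes U: "ugraph V E" and M: "M \<subseteq> V" and s: "s \<in> V - M" and q: "q \<le> card (V - M) - 1"
  shows "(\<forall>V'. V' \<subseteq> V - M \<and> card V' \<le> q \<and> s \<notin> V' \<longrightarrow> (\<exists>m\<in>M. reach (V - V') E s m))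
     \<longleftrightarrow> q + 1 \<le> min_cut (star_V V M) (star_E V E M) (Some s) None"
proof -
  let ?W = "star_V V M" and ?F = "star_E V E M"
  have fin: "finite V" using U unfolding ugraph_def by auto
  have cardW: "card (?W - {None}) = card (V - M)"
    unfolding star_V_def by (simp add: card_image)
  have cpos: "card (V - M) \<ge> 1" using s fin
    by (metis One_nat_def Suc_leI card_gt_0_iff empty_iff finite_Diff)
  show ?thesis
  proof (cases "?F (Some s) None")
    case True
    then obtain m where m: "m \<in> M" "E s m" unfolding star_E_def mon_nbrs_def by auto
    have "reach (V - V') E s m" if "V' \<subseteq> V - M" "s \<notin> V'" for V'
    proof -
      have "m \<in> V - V'" using m M that by auto
      then have "(s, m) \<in> {(x, y). x \<in> V - V' \<and> y \<in> V - V' \<and> E x y}" using s that m by auto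
      then show ?thesis unfolding reach_def using s that by auto
    qed
    moreover have "q + 1 \<le> min_cut ?W ?F (Some s) None"
      using True cardW cpos q unfolding min_cut_def by simp
    ultimately show ?thesis using m by auto
  next
    case False
    let ?P = "\<lambda>k. \<exists>C. C \<subseteq> ?W - {Some s, None} \<and> card C = k \<and> \<not> reach (?W - C) ?F (Some s) None"
    have mc: "min_cut ?W ?F (Some s) None = (LEAST k. ?P k)"
      using False unfolding min_cut_def by simp
    have ex: "?P (card (?W - {Some s, None}))"
    proof -
      have W2: "?W - (?W - {Some s, None}) = {Some s, None}" using s unfolding star_V_def by auto
      have n1: "\<not> ?F (Some s) (Some s)" "\<not> ?F None None" "\<not> ?F None (Some s)"
        using False U unfolding ugraph_def by (auto simp: star_E_def)
      have emp: "{(x, y). x \<in> {Some s, None} \<and> y \<in> {Some s, None} \<and> ?F x y} = {}"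
      proof -
        have "\<forall>x\<in>{Some s, None}. \<forall>y\<in>{Some s, None}. \<not> ?F x y" using False n1 by simp
        then show ?thesis by blast
      qed
      have "\<not> reach (?W - (?W - {Some s, None})) ?F (Some s) None"
        unfolding W2 reach_def emp by simp
      then show ?thesis by (intro exI[where x="?W - {Some s, None}"] conjI subset_refl refl)
    qed
    show ?thesis
    proof
      assume L: "\<forall>V'. V' \<subseteq> V - M \<and> card V' \<le> q \<and> s \<notin> V' \<longrightarrow> (\<exists>m\<in>M. reach (V - V') E s m)"
      show "q + 1 \<le> min_cut ?W ?F (Some s) None"
      proof (rule ccontr)
        assume "\<not> ?thesis"
        hence lq: "(LEAST k. ?P k) \<le> q" using mc by simp
        have "?P (LEAST k. ?P k)" by (rule LeastI) (rule ex)
        then obtain C where C0: "C \<subseteq> ?W - {Some s, None} \<and>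
          card C = (LEAST k. ?P k) \<and> \<not> reach (?W - C) ?F (Some s) None" ..
        note C = conjunct1[OF C0] conjunct1[OF conjunct2[OF C0]] conjunct2[OF conjunct2[OF C0]]
        define V' where "V' = {v. Some v \<in> C}"
        have CV: "C = Some ` V'" using C(1) unfolding V'_def star_V_def by auto
        have V'1a: "V' \<subseteq> V - M"
        proof
          fix v assume "v \<in> V'"
          hence "Some v \<in> C" unfolding V'_def by simp
          hence "Some v \<in> insert None (Some ` (V - M))" using C(1) unfolding star_V_def by blast
          thus "v \<in> V - M" by auto
        qed
        have "Some s \<notin> C" using C(1) by blast
        hence V'1b: "s \<notin> V'" unfolding V'_def by simp
        note V'1 = V'1a V'1b
        have "card V' = card C" unfolding CV by (rule card_image[symmetric]) simp
        hence "card V' \<le> q" using lq C(2) by simp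
        hence "\<exists>m\<in>M. reach (V - V') E s m" using L V'1 by blast
        then obtain m where m: "m \<in> M" "reach (V - V') E s m" ..
        have sV: "s \<in> V - M - V'" using s V'1b by simp
        have "reach (star_V V M - Some ` V') (star_E V E M) (Some s) None"
          by (rule path_fwd[OF M V'1a sV m])
        with C(3) CV show False by simp
      qed
    next
      assume R: "q + 1 \<le> min_cut ?W ?F (Some s) None"
      show "\<forall>V'. V' \<subseteq> V - M \<and> card V' \<le> q \<and> s \<notin> V' \<longrightarrow> (\<exists>m\<in>M. reach (V - V') E s m)"
      proof (intro allI impI)
        fix V' assume V': "V' \<subseteq> V - M \<and> card V' \<le> q \<and> s \<notin> V'"
        show "\<exists>m\<in>M. reach (V - V') E s m"
        proof (rule ccontr)
          assume nr: "\<not> ?thesis"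
          have V'a: "V' \<subseteq> V - M" using V' by simp
          have sV: "s \<in> V - M - V'" using s V' by simp
          have nre: "\<not> reach (?W - Some ` V') ?F (Some s) None"
          proof
            assume "reach (?W - Some ` V') ?F (Some s) None"
            from path_bwd[OF M V'a sV this] nr show False by simp
          qed
          have sub: "Some ` V' \<subseteq> ?W - {Some s, None}" using V'a sV unfolding star_V_def by blast
          have cs: "card (Some ` V') = card V'" by (rule card_image) simp
          have "?P (card V')" using sub cs nre by blast
          hence "(LEAST k. ?P k) \<le> card V'" by (rule Least_le)
          with R mc V' show False by simp
        qed
      qed
    qed
  qed
qed

theorem lemma4:
  fixes V :: "'a set" and E :: "'a \<Rightarrow> 'a \<Rightarrow> bool" and M S :: "'a set" and q :: nat
  assumes "ugraph V E" and "connected_graph V E"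
    and "M \<subseteq> V"
    and "S \<subseteq> V - M" and "S \<noteq> {}"
    and "q \<le> card (V - M) - 1"
  shows "(\<forall>V'. V' \<subseteq> V - M \<and> card V' \<le> q \<longrightarrow>
            (\<forall>s\<in>S - V'. \<exists>m\<in>M. reach (V - V') E s m))
         \<longleftrightarrow> Gamma (star_V V M) (star_E V E M) (Some ` S) None \<ge> q + 1"
proof -
  have fin: "finite S" using assms(1,4) unfolding ugraph_def by (meson finite_Diff finite_subset)
  have "Gamma (star_V V M) (star_E V E M) (Some ` S) None \<ge> q + 1 \<longleftrightarrow>
        (\<forall>s\<in>S. q + 1 \<le> min_cut (star_V V M) (star_E V E M) (Some s) None)"
    unfolding Gamma_def using fin assms(5) by (simp add: Min_ge_iff)
  also have "\<dots> \<longleftrightarrow> (\<forall>s\<in>S. \<forall>V'. V' \<subseteq> V - M \<and> card V' \<le> q \<and> s \<notin> V' \<longrightarrow> (\<exists>m\<in>M. reach (V - V') E s m))"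
  proof (rule ball_cong[OF refl])
    fix s assume "s \<in> S"
    hence "s \<in> V - M" using assms(4) by blast
    from per_s[OF assms(1,3) this assms(6)]
    show "q + 1 \<le> min_cut (star_V V M) (star_E V E M) (Some s) None \<longleftrightarrow> (\<forall>V'. V' \<subseteq> V - M \<and> card V' \<le> q \<and> s \<notin> V' \<longrightarrow> (\<exists>m\<in>M. reach (V - V') E s m))"
      by simp
  qed
  finally show ?thesis by blast
qed

end
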